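(* Let $\mathcal X$ be a finite set, let $Q\in\mathbb R^{\mathcal X\times\mathcal X}$ be an irreducible generator matrix (off-diagonal entries nonnegative, rows summing to zero) with invariant probability vector $\pi$ having all entries strictly positive ($Q^{\mathsf T}\pi=0$, $\sum_x\pi_x=1$), and define $A\in\mathbb R^{\mathcal X\times\mathcal X}$ by $A_{xy}:=Q_{yx}\sqrt{\pi_y/\pi_x}-Q_{xy}\sqrt{\pi_x/\pi_y}$. Define $\tilde{\mathcal E}:\mathbb R^{\mathcal X}\to\mathbb R$ and $\tilde{\mathbb J}:\mathbb R^{\mathcal X}\to\mathbb R^{\mathcal X\times\mathcal X}$ by $$\tilde{\mathcal E}(\omega):=1-\sqrt\pi\cdot\omega,\qquad \tilde{\mathbb J}(\omega):=\tfrac12\big(\sqrt\pi\otimes(A\omega)-(A\omega)\otimes\sqrt\pi\big).$$ Then the ODE $\dot\omega=\frac12A\omega$ admits the Hamiltonian structure $(\mathbb R^{\mathcal X},\tilde{\mathcal E},\tilde{\mathbb J})$: $\tilde{\mathbb J}(\omega)$ is skew-symmetric for every $\omega$, the bracket $\{\mathcal G_1,\mathcal G_2\}(\omega):=\langle D\mathcal G_1(\omega),\tilde{\mathbb J}(\omega)D\mathcal G_2(\omega)\rangle$ satisfies the Jacobi identity, and $\frac12A\omega=\tilde{\mathbb J}(\omega)D\tilde{\mathcal E}(\omega)$ for all $\omega\in\mathbb R^{\mathcal X}$.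
   Context: $\sqrt\pi$ denotes the entrywise square root, $v\cdot w$ and $\langle v,w\rangle$ the Euclidean inner product, $D$ the gradient, and $a\otimes b$ the outer product, i.e. the matrix with $(a\otimes b)v=\langle b,v\rangle a$. The ODE $\dot\omega=\frac12A\omega$ arises from $\dot\rho_x=\sum_{y\ne x}A_{xy}\sqrt{\rho_x\rho_y}$ via $\omega_x=\sqrt{\rho_x}$. *)

theory Defs
  imports "HOL-Analysis.Analysis"
begin

text \<open>Vectors in R^X are modelled as real^'x with 'x a finite type; matrices as real^'x^'x,
  with entry (x,y) written M$x$y.\<close>

definition generator :: "real^'x^'x \<Rightarrow> bool" where
  "generator Q \<longleftrightarrow> (\<forall>x y. x \<noteq> y \<longrightarrow> Q$x$y \<ge> 0) \<and> (\<forall>x. (\<Sum>y\<in>UNIV. Q$x$y) = 0)"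

definition irreducible_gen :: "real^'x^'x \<Rightarrow> bool" where
  "irreducible_gen Q \<longleftrightarrow> (\<forall>x y. x \<noteq> y \<longrightarrow> (x, y) \<in> {(u, v). u \<noteq> v \<and> Q$u$v > 0}\<^sup>+)"

definition sqrtv :: "real^'x \<Rightarrow> real^'x" where
  "sqrtv p = (\<chi> x. sqrt (p$x))"

definition outer :: "real^'x \<Rightarrow> real^'x \<Rightarrow> real^'x^'x" where
  "outer a b = (\<chi> i j. a$i * b$j)"

definition Amat :: "real^'x^'x \<Rightarrow> real^'x \<Rightarrow> real^'x^'x" where
  "Amat Q p = (\<chi> x y. Q$y$x * sqrt (p$y / p$x) - Q$x$y * sqrt (p$x / p$y))"

definition Etil :: "real^'x \<Rightarrow> real^'x \<Rightarrow> real" where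
  "Etil p w = 1 - sqrtv p \<bullet> w"

definition Jtil :: "real^'x^'x \<Rightarrow> real^'x \<Rightarrow> real^'x \<Rightarrow> real^'x^'x" where
  "Jtil Q p w = (1/2) *\<^sub>R (outer (sqrtv p) (Amat Q p *v w) - outer (Amat Q p *v w) (sqrtv p))"

definition grad :: "(real^'x \<Rightarrow> real) \<Rightarrow> real^'x \<Rightarrow> real^'x" where
  "grad G w = (\<chi> i. frechet_derivative G (at w) (axis i 1))"

definition bracket :: "(real^'x \<Rightarrow> real^'x^'x) \<Rightarrow> (real^'x \<Rightarrow> real) \<Rightarrow> (real^'x \<Rightarrow> real) \<Rightarrow> real^'x \<Rightarrow> real" where
  "bracket J G1 G2 w = grad G1 w \<bullet> (J w *v grad G2 w)"

end

theory Submission imports Defs begin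

lemma grad_eq:
  fixes G :: "real^'n \<Rightarrow> real"
  assumes "(G has_derivative G') (at w)"
  shows "grad G w \<bullet> h = G' h"
proof -
  have fd: "frechet_derivative G (at w) = G'"
    using assms by (metis frechet_derivative_at)
  have lin: "linear G'" using assms has_derivative_linear by blast
  have "h = (\<Sum>i\<in>UNIV. (h$i) *\<^sub>R axis i 1)"
  proof -
    have "\<And>j. (\<Sum>i\<in>UNIV. (h$i) *\<^sub>R axis i (1::real)) $ j = h $ j"
      by (simp add: axis_def if_distrib[of "\<lambda>z. _ * z"] cong: if_cong)
    then show ?thesis by (simp add: vec_eq_iff)
  qed
  then have e1: "G' h = G' (\<Sum>i\<in>UNIV. (h$i) *\<^sub>R axis i 1)" by (rule arg_cong)
  have e2: "G' (\<Sum>i\<in>UNIV. (h$i) *\<^sub>R axis i 1) = (\<Sum>i\<in>UNIV. (h$i) * G' (axis i 1))"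
    using lin by (simp add: linear_sum linear_scale)
  have "G' h = (\<Sum>i\<in>UNIV. (h$i) * G' (axis i 1))" using e1 e2 by simp
  also have "\<dots> = grad G w \<bullet> h"
    by (simp add: grad_def fd inner_vec_def mult.commute)
  finally show ?thesis by simp
qed

lemma grad_works:
  fixes G :: "real^'n \<Rightarrow> real"
  assumes "G differentiable (at w)"
  shows "(G has_derivative (\<lambda>h. grad G w \<bullet> h)) (at w)"
proof -
  have "(G has_derivative frechet_derivative G (at w)) (at w)"
    using assms frechet_derivative_works by blast
  moreover have "(\<lambda>h. grad G w \<bullet> h) = frechet_derivative G (at w)"
    using grad_eq[OF calculation] by auto
  ultimately show ?thesis by simp
qed


lemma hess_approx:
  fixes f :: "'a::real_inner \<Rightarrow> real"
  assumes df: "\<And>y. (f has_derivative (\<lambda>h. g y \<bullet> h)) (at y)"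
    and dg: "(g has_derivative H) (at x)"
    and e: "e > 0"
  shows "\<exists>d>0. \<forall>t. 0 < t \<and> t < d \<longrightarrow>
     \<bar>(f (x + t *\<^sub>R u + t *\<^sub>R v) - f (x + t *\<^sub>R u) - f (x + t *\<^sub>R v) + f x) - t * t * (H v \<bullet> u)\<bar>
       \<le> e * (t * t) * ((2 * norm u + norm v) * norm u)"
proof -
  have bl: "bounded_linear H" using dg has_derivative_bounded_linear by blast
  from dg e obtain d0 where d0: "d0 > 0"
    and d0b: "\<And>y. norm (y - x) < d0 \<Longrightarrow> norm (g y - g x - H (y - x)) \<le> e * norm (y - x)"
    unfolding has_derivative_at_alt by blast
  define d where "d = d0 / (norm u + norm v + 1)"
  have dpos: "d > 0" using d0 unfolding d_def by (intro divide_pos_pos) (auto intro: add_nonneg_pos)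
  show ?thesis
  proof (intro exI[of _ d] conjI allI impI dpos)
    fix t :: real assume t: "0 < t \<and> t < d"
    define \<phi> where "\<phi> = (\<lambda>s. f (x + s *\<^sub>R u + t *\<^sub>R v) - f (x + s *\<^sub>R u))"
    define \<phi>' where "\<phi>' = (\<lambda>s. (g (x + s *\<^sub>R u + t *\<^sub>R v) - g (x + s *\<^sub>R u)) \<bullet> u)"
    have der: "DERIV \<phi> s :> \<phi>' s" for s
    proof -
      have h1: "((\<lambda>s. x + s *\<^sub>R u + t *\<^sub>R v) has_derivative (\<lambda>h. h *\<^sub>R u)) (at s)"
        by (auto intro!: derivative_eq_intros)
      have h2: "((\<lambda>s. x + s *\<^sub>R u) has_derivative (\<lambda>h. h *\<^sub>R u)) (at s)"
        by (auto intro!: derivative_eq_intros)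
      have c1: "((\<lambda>s. f (x + s *\<^sub>R u + t *\<^sub>R v)) has_derivative (\<lambda>h. g (x + s *\<^sub>R u + t *\<^sub>R v) \<bullet> (h *\<^sub>R u))) (at s)"
        using has_derivative_compose[OF h1 df] by simp
      have c2: "((\<lambda>s. f (x + s *\<^sub>R u)) has_derivative (\<lambda>h. g (x + s *\<^sub>R u) \<bullet> (h *\<^sub>R u))) (at s)"
        using has_derivative_compose[OF h2 df] by simp
      have "(\<phi> has_derivative (\<lambda>h. g (x + s *\<^sub>R u + t *\<^sub>R v) \<bullet> (h *\<^sub>R u) - g (x + s *\<^sub>R u) \<bullet> (h *\<^sub>R u))) (at s)"
        unfolding \<phi>_def by (rule has_derivative_diff[OF c1 c2])
      moreover have "(\<lambda>h. g (x + s *\<^sub>R u + t *\<^sub>R v) \<bullet> (h *\<^sub>R u) - g (x + s *\<^sub>R u) \<bullet> (h *\<^sub>R u)) = (*) (\<phi>' s)"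
        by (auto simp: \<phi>'_def inner_diff_left algebra_simps)
      ultimately show ?thesis by (simp add: has_field_derivative_def)
    qed
    obtain z where z: "0 < z" "z < t" and mvt: "\<phi> t - \<phi> 0 = (t - 0) * \<phi>' z"
      using MVT2[of 0 t \<phi> \<phi>'] der t by blast
    have Delta: "\<phi> t - \<phi> 0 = f (x + t *\<^sub>R u + t *\<^sub>R v) - f (x + t *\<^sub>R u) - f (x + t *\<^sub>R v) + f x"
      by (simp add: \<phi>_def)
    define k1 where "k1 = z *\<^sub>R u + t *\<^sub>R v"
    define k2 where "k2 = z *\<^sub>R u"
    define e1 where "e1 = g (x + k1) - g x - H k1"
    define e2 where "e2 = g (x + k2) - g x - H k2"
    have nk1: "norm k1 \<le> t * (norm u + norm v)"
    proof -
      have "norm k1 \<le> z * norm u + t * norm v" unfolding k1_def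
        using norm_triangle_ineq[of "z *\<^sub>R u" "t *\<^sub>R v"] z t by simp
      also have "\<dots> \<le> t * norm u + t * norm v"
        using z by (simp add: mult_right_mono)
      finally show ?thesis by (simp add: algebra_simps)
    qed
    have nk2: "norm k2 \<le> t * norm u" unfolding k2_def using z by (simp add: mult_right_mono)
    have tsmall: "t * (norm u + norm v) < d0"
    proof -
      have "t * (norm u + norm v) \<le> t * (norm u + norm v + 1)" using t by simp
      also have "\<dots> < d * (norm u + norm v + 1)"
        using t by (intro mult_strict_right_mono) (auto intro: add_nonneg_pos)
      also have "\<dots> = d0" unfolding d_def
      proof -
        have "norm u + norm v + 1 > 0" by (intro add_nonneg_pos) auto
        then show "d0 / (norm u + norm v + 1) * (norm u + norm v + 1) = d0" by simp
      qed
      finally show ?thesis .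
    qed
    have "norm k2 < d0" 
    proof -
      have "t * norm u \<le> t * (norm u + norm v)" using t by (intro mult_left_mono) auto
      then show ?thesis using nk2 tsmall by linarith
    qed
    then have ne2: "norm e2 \<le> e * norm k2" using d0b[of "x + k2"] by (simp add: e2_def)
    have "norm k1 < d0" using nk1 tsmall by simp
    then have ne1: "norm e1 \<le> e * norm k1" using d0b[of "x + k1"] by (simp add: e1_def)
    have split: "g (x + z *\<^sub>R u + t *\<^sub>R v) - g (x + z *\<^sub>R u) = t *\<^sub>R H v + (e1 - e2)"
    proof -
      have "H k1 - H k2 = t *\<^sub>R H v"
        unfolding k1_def k2_def using bl[THEN bounded_linear.linear]
        by (simp add: linear_add linear_scale)
      then show ?thesis unfolding e1_def e2_def k1_def k2_def by (simp add: algebra_simps)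
    qed
    have phz: "\<phi>' z = t * (H v \<bullet> u) + (e1 - e2) \<bullet> u" (is ?P)
      unfolding \<phi>'_def split by (simp add: inner_add_left)
    have eq: "?P \<Longrightarrow> (f (x + t *\<^sub>R u + t *\<^sub>R v) - f (x + t *\<^sub>R u) - f (x + t *\<^sub>R v) + f x) - t * t * (H v \<bullet> u)
        = t * ((e1 - e2) \<bullet> u)"
    proof -
      assume a: "\<phi>' z = t * (H v \<bullet> u) + (e1 - e2) \<bullet> u"
      have "t * \<phi>' z = t * t * (H v \<bullet> u) + t * ((e1 - e2) \<bullet> u)" unfolding a by (simp add: algebra_simps)
      then show ?thesis using mvt Delta by simp
    qed
    have "\<bar>(e1 - e2) \<bullet> u\<bar> \<le> norm (e1 - e2) * norm u" by (rule Cauchy_Schwarz_ineq2)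
    also have "\<dots> \<le> (norm e1 + norm e2) * norm u"
      by (intro mult_right_mono norm_triangle_ineq4) simp
    also have "\<dots> \<le> (e * (t * (norm u + norm v)) + e * (t * norm u)) * norm u"
    proof (intro mult_right_mono add_mono)
      show "norm e1 \<le> e * (t * (norm u + norm v))"
        using ne1 nk1 e by (meson mult_left_mono order_trans less_imp_le)
      show "norm e2 \<le> e * (t * norm u)"
        using ne2 nk2 e by (meson mult_left_mono order_trans less_imp_le)
    qed simp
    also have "\<dots> = e * t * ((2 * norm u + norm v) * norm u)" by (simp add: algebra_simps)
    finally have b: "\<bar>(e1 - e2) \<bullet> u\<bar> \<le> e * t * ((2 * norm u + norm v) * norm u)" .
    have "\<bar>t * ((e1 - e2) \<bullet> u)\<bar> = t * \<bar>(e1 - e2) \<bullet> u\<bar>" using t by (simp add: abs_mult)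
    also have "\<dots> \<le> t * (e * t * ((2 * norm u + norm v) * norm u))"
      using b t by (simp add: mult_left_mono)
    finally show "\<bar>(f (x + t *\<^sub>R u + t *\<^sub>R v) - f (x + t *\<^sub>R u) - f (x + t *\<^sub>R v) + f x) - t * t * (H v \<bullet> u)\<bar>
       \<le> e * (t * t) * ((2 * norm u + norm v) * norm u)"
      unfolding eq[OF phz] by (simp add: algebra_simps)
  qed
qed

lemma hess_sym:
  fixes f :: "'a::real_inner \<Rightarrow> real"
  assumes df: "\<And>y. (f has_derivative (\<lambda>h. g y \<bullet> h)) (at y)"
    and dg: "(g has_derivative H) (at x)"
  shows "H v \<bullet> u = H u \<bullet> v"
proof (rule ccontr)
  assume ne: "H v \<bullet> u \<noteq> H u \<bullet> v"
  define D where "D = \<bar>H v \<bullet> u - H u \<bullet> v\<bar>"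
  have Dpos: "D > 0" using ne by (simp add: D_def)
  define C where "C = (2 * norm u + norm v) * norm u + (2 * norm v + norm u) * norm v + 1"
  have Cpos: "C > 0" unfolding C_def by (intro add_nonneg_pos) auto
  define e where "e = D / (2 * C)"
  have epos: "e > 0" using Dpos Cpos by (simp add: e_def)
  obtain d1 where d1: "d1 > 0" and b1: "\<And>t. 0 < t \<and> t < d1 \<Longrightarrow>
     \<bar>(f (x + t *\<^sub>R u + t *\<^sub>R v) - f (x + t *\<^sub>R u) - f (x + t *\<^sub>R v) + f x) - t * t * (H v \<bullet> u)\<bar>
       \<le> e * (t * t) * ((2 * norm u + norm v) * norm u)"
    using hess_approx[OF df dg epos, of u v] by blast
  obtain d2 where d2: "d2 > 0" and b2: "\<And>t. 0 < t \<and> t < d2 \<Longrightarrow>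
     \<bar>(f (x + t *\<^sub>R v + t *\<^sub>R u) - f (x + t *\<^sub>R v) - f (x + t *\<^sub>R u) + f x) - t * t * (H u \<bullet> v)\<bar>
       \<le> e * (t * t) * ((2 * norm v + norm u) * norm v)"
    using hess_approx[OF df dg epos, of v u] by blast
  define t where "t = min d1 d2 / 2"
  have t: "0 < t" "t < d1" "t < d2" using d1 d2 by (auto simp: t_def)
  have tt: "t * t > 0" using t by simp
  have comm: "x + t *\<^sub>R v + t *\<^sub>R u = x + t *\<^sub>R u + t *\<^sub>R v" by (simp add: algebra_simps)
  have "t * t * D \<le> e * (t * t) * ((2 * norm u + norm v) * norm u) + e * (t * t) * ((2 * norm v + norm u) * norm v)"
  proof -
    have "t * t * D = \<bar>t * t * (H v \<bullet> u) - t * t * (H u \<bullet> v)\<bar>"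
      using tt unfolding D_def by (simp add: abs_mult right_diff_distrib[symmetric])
    then show ?thesis using b1[of t] b2[of t] t unfolding comm by linarith
  qed
  also have "\<dots> < e * (t * t) * C"
    using epos tt unfolding C_def by (simp add: algebra_simps)
  also have "\<dots> = t * t * D / 2" using Cpos by (simp add: e_def)
  moreover have "t * t * D > 0" using tt Dpos by simp
  ultimately show False by linarith
qed

lemma outer_mult: "outer a b *v v = (b \<bullet> v) *\<^sub>R a"
  by (simp add: vec_eq_iff matrix_vector_mult_def outer_def inner_vec_def sum_distrib_left algebra_simps)

lemma Jv:
  fixes M :: "real^'n^'n" and s :: "real^'n"
  shows "((1/2) *\<^sub>R (outer s (M *v w) - outer (M *v w) s)) *v v
     = (1/2) *\<^sub>R (((M *v w) \<bullet> v) *\<^sub>R s - (s \<bullet> v) *\<^sub>R (M *v w))"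
  by (simp add: scaleR_matrix_vector_assoc[symmetric] matrix_vector_mult_diff_rdistrib outer_mult)

lemma J_skew:
  fixes M :: "real^'n^'n" and s :: "real^'n"
  shows "x \<bullet> (((1/2) *\<^sub>R (outer s (M *v w) - outer (M *v w) s)) *v y)
     = - (y \<bullet> (((1/2) *\<^sub>R (outer s (M *v w) - outer (M *v w) s)) *v x))"
  unfolding Jv by (simp add: inner_diff_right inner_commute algebra_simps)

lemma bracket_eq:
  fixes M :: "real^'n^'n" and s :: "real^'n"
  defines "J \<equiv> (\<lambda>w. (1/2) *\<^sub>R (outer s (M *v w) - outer (M *v w) s))"
  shows "bracket J G2 G3 = (\<lambda>y. (1/2) * (((M *v y) \<bullet> grad G3 y) * (grad G2 y \<bullet> s)
            - (s \<bullet> grad G3 y) * (grad G2 y \<bullet> (M *v y))))"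
  unfolding bracket_def J_def Jv by (rule ext) (simp add: inner_diff_right algebra_simps)

lemma bracket_deriv:
  fixes M :: "real^'n^'n" and s :: "real^'n"
  defines "J \<equiv> (\<lambda>w. (1/2) *\<^sub>R (outer s (M *v w) - outer (M *v w) s))"
  assumes d2: "(grad G2 has_derivative H2) (at w)" and d3: "(grad G3 has_derivative H3) (at w)"
  shows "(bracket J G2 G3 has_derivative (\<lambda>h. (1/2) * (
      ((M *v h) \<bullet> grad G3 w + (M *v w) \<bullet> H3 h) * (grad G2 w \<bullet> s)
      + ((M *v w) \<bullet> grad G3 w) * (H2 h \<bullet> s)
      - ((s \<bullet> H3 h) * (grad G2 w \<bullet> (M *v w))
         + (s \<bullet> grad G3 w) * (H2 h \<bullet> (M *v w) + grad G2 w \<bullet> (M *v h)))))) (at w)"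
  unfolding J_def bracket_eq
  by (auto intro!: derivative_eq_intros d2 d3
      matrix_vector_mul_bounded_linear[THEN bounded_linear_imp_has_derivative] simp: fun_eq_iff field_simps)

definition Tf :: "real \<Rightarrow> real \<Rightarrow> real \<Rightarrow> real \<Rightarrow> real \<Rightarrow> real \<Rightarrow> real \<Rightarrow> real \<Rightarrow> real
   \<Rightarrow> real \<Rightarrow> real \<Rightarrow> real \<Rightarrow> real \<Rightarrow> real \<Rightarrow> real \<Rightarrow> real \<Rightarrow> real \<Rightarrow> real" where
  "Tf a1 c1 b1 a2 c2 b2 a3 c3 b3 j_ss j_sa j_as j_aa k_ss k_sa k_as k_aa =
    1/2 * ( 1/2*(a1*j_ss - c1*j_as) * a3
      + c2 * ( -1/2*c1*b3 + 1/2*(a1*k_sa - c1*k_aa) )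
      - (1/2*(a1*j_sa - c1*j_aa) - 1/2*c1*b2) * c3
      - a2 * (1/2*(a1*k_ss - c1*k_as)))"

lemma Tf_cyc:
  "Tf a1 c1 b1 a2 c2 b2 a3 c3 b3 h2ss h2as h2as h2aa h3ss h3as h3as h3aa
   + Tf a2 c2 b2 a3 c3 b3 a1 c1 b1 h3ss h3as h3as h3aa h1ss h1as h1as h1aa
   + Tf a3 c3 b3 a1 c1 b1 a2 c2 b2 h1ss h1as h1as h1aa h2ss h2as h2as h2aa = 0"
  unfolding Tf_def by (simp add: algebra_simps)

lemma neg3: "x + y + z = 0 \<Longrightarrow> - x + - y + - z = (0::real)" by simp

lemma jac_term:
  fixes M :: "real^'n^'n" and s :: "real^'n"
  defines "J \<equiv> (\<lambda>w. (1/2) *\<^sub>R (outer s (M *v w) - outer (M *v w) s))"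
  assumes Ms: "M *v s = 0"
    and d2: "(grad G2 has_derivative H2) (at w)" and d3: "(grad G3 has_derivative H3) (at w)"
  shows "bracket J G1 (bracket J G2 G3) w = - Tf ((M *v w) \<bullet> grad G1 w) (s \<bullet> grad G1 w) ((M *v (M *v w)) \<bullet> grad G1 w)
     ((M *v w) \<bullet> grad G2 w) (s \<bullet> grad G2 w) ((M *v (M *v w)) \<bullet> grad G2 w)
     ((M *v w) \<bullet> grad G3 w) (s \<bullet> grad G3 w) ((M *v (M *v w)) \<bullet> grad G3 w)
     (H2 s \<bullet> s) (H2 s \<bullet> (M *v w)) (H2 (M *v w) \<bullet> s) (H2 (M *v w) \<bullet> (M *v w))
     (H3 s \<bullet> s) (H3 s \<bullet> (M *v w)) (H3 (M *v w) \<bullet> s) (H3 (M *v w) \<bullet> (M *v w))" (is "_ = ?rhs")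
proof -
  have l2: "linear H2" using d2 has_derivative_linear by blast
  have l3: "linear H3" using d3 has_derivative_linear by blast
  define a where "a = M *v w"
  define h where "h = (1/2) *\<^sub>R ((a \<bullet> grad G1 w) *\<^sub>R s - (s \<bullet> grad G1 w) *\<^sub>R a)"
  have Jh: "J w *v grad G1 w = h" unfolding J_def Jv h_def a_def ..
  have H2h: "H2 h = (1/2) *\<^sub>R ((a \<bullet> grad G1 w) *\<^sub>R H2 s - (s \<bullet> grad G1 w) *\<^sub>R H2 a)"
    unfolding h_def using l2 by (simp add: linear_diff linear_scale)
  have H3h: "H3 h = (1/2) *\<^sub>R ((a \<bullet> grad G1 w) *\<^sub>R H3 s - (s \<bullet> grad G1 w) *\<^sub>R H3 a)"
    unfolding h_def using l3 by (simp add: linear_diff linear_scale)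
  have Mh: "M *v h = (- (1/2) * (s \<bullet> grad G1 w)) *\<^sub>R (M *v a)"
    unfolding h_def using matrix_vector_mul_linear[of M] by (simp add: linear_diff linear_scale Ms)
  have "bracket J G1 (bracket J G2 G3) w = - (grad (bracket J G2 G3) w \<bullet> (J w *v grad G1 w))"
    unfolding bracket_def J_def by (rule J_skew)
  also have "\<dots> = - ((1/2) * (
      ((M *v h) \<bullet> grad G3 w + a \<bullet> H3 h) * (grad G2 w \<bullet> s)
      + (a \<bullet> grad G3 w) * (H2 h \<bullet> s)
      - ((s \<bullet> H3 h) * (grad G2 w \<bullet> a)
         + (s \<bullet> grad G3 w) * (H2 h \<bullet> a + grad G2 w \<bullet> (M *v h)))))"
    unfolding Jh using grad_eq[OF bracket_deriv[OF d2 d3, where M=M and s=s, folded J_def]] a_def by simp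
  also have "\<dots> = ?rhs"
  proof -
    have c: "a \<bullet> H3 s = H3 s \<bullet> a" "a \<bullet> H3 a = H3 a \<bullet> a" "s \<bullet> H3 s = H3 s \<bullet> s" "s \<bullet> H3 a = H3 a \<bullet> s"
      "grad G2 w \<bullet> s = s \<bullet> grad G2 w" "grad G2 w \<bullet> a = a \<bullet> grad G2 w"
      "grad G2 w \<bullet> (M *v a) = (M *v a) \<bullet> grad G2 w" by (simp_all add: inner_commute)
    show ?thesis
      unfolding H2h H3h Mh a_def[symmetric]
      apply (simp only: inner_diff_left inner_diff_right inner_scaleR_left inner_scaleR_right c)
      apply (simp only: Tf_def)
      apply (simp add: algebra_simps)
      done
  qed
  finally show ?thesis .
qed

lemma jacobi_generic:
  fixes M :: "real^'n^'n" and s :: "real^'n" and G1 G2 G3 :: "real^'n \<Rightarrow> real"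
  defines "J \<equiv> (\<lambda>w. (1/2) *\<^sub>R (outer s (M *v w) - outer (M *v w) s))"
  assumes Ms: "M *v s = 0"
    and a1: "\<forall>w. G1 differentiable (at w)" "\<forall>w. grad G1 differentiable (at w)"
    and a2: "\<forall>w. G2 differentiable (at w)" "\<forall>w. grad G2 differentiable (at w)"
    and a3: "\<forall>w. G3 differentiable (at w)" "\<forall>w. grad G3 differentiable (at w)"
  shows "bracket J G1 (bracket J G2 G3) w + bracket J G2 (bracket J G3 G1) w
       + bracket J G3 (bracket J G1 G2) w = 0"
proof -
  define H1 where "H1 = frechet_derivative (grad G1) (at w)"
  define H2 where "H2 = frechet_derivative (grad G2) (at w)"
  define H3 where "H3 = frechet_derivative (grad G3) (at w)"
  have d1: "(grad G1 has_derivative H1) (at w)" using a1 frechet_derivative_works H1_def by blast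
  have d2: "(grad G2 has_derivative H2) (at w)" using a2 frechet_derivative_works H2_def by blast
  have d3: "(grad G3 has_derivative H3) (at w)" using a3 frechet_derivative_works H3_def by blast
  define a where "a = M *v w"
  have s1: "H1 s \<bullet> a = H1 a \<bullet> s"
    by (rule hess_sym[OF grad_works d1]) (use a1 in blast)
  have s2: "H2 s \<bullet> a = H2 a \<bullet> s"
    by (rule hess_sym[OF grad_works d2]) (use a2 in blast)
  have s3: "H3 s \<bullet> a = H3 a \<bullet> s"
    by (rule hess_sym[OF grad_works d3]) (use a3 in blast)
  show ?thesis
    unfolding J_def
    unfolding jac_term[OF Ms d2 d3] jac_term[OF Ms d3 d1] jac_term[OF Ms d1 d2]
    unfolding a_def[symmetric] s1 s2 s3
    using Tf_cyc[of "a \<bullet> grad G1 w" "s \<bullet> grad G1 w" "(M *v a) \<bullet> grad G1 w" "a \<bullet> grad G2 w" "s \<bullet> grad G2 w" "(M *v a) \<bullet> grad G2 w" "a \<bullet> grad G3 w" "s \<bullet> grad G3 w" "(M *v a) \<bullet> grad G3 w" "H2 s \<bullet> s" "H2 a \<bullet> s" "H2 a \<bullet> a" "H3 s \<bullet> s" "H3 a \<bullet> s" "H3 a \<bullet> a" "H1 s \<bullet> s" "H1 a \<bullet> s" "H1 a \<bullet> a"] by (rule neg3)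
qed

lemma A_s:
  fixes Q :: "real^'x::finite^'x" and p :: "real^'x"
  assumes gen: "generator Q" and pos: "\<forall>x. p$x > 0" and st: "transpose Q *v p = 0"
  shows "Amat Q p *v sqrtv p = 0"
proof -
  have row: "(\<Sum>y\<in>UNIV. Q$x$y) = 0" for x using gen by (simp add: generator_def)
  have colp: "(\<Sum>y\<in>UNIV. Q$y$x * p$y) = 0" for x
    using st by (simp add: vec_eq_iff matrix_vector_mult_def transpose_def)
  have "(Amat Q p *v sqrtv p)$x = 0" for x
  proof -
    have px: "p$x > 0" using pos by blast
    have "(Amat Q p *v sqrtv p)$x = (\<Sum>y\<in>UNIV. Q$y$x * p$y / sqrt (p$x) - Q$x$y * sqrt (p$x))"
    proof (simp add: matrix_vector_mult_def Amat_def sqrtv_def, rule sum.cong[OF refl])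
      fix y
      have py: "p$y > 0" using pos by blast
      show "(Q $ y $ x * sqrt (p $ y / p $ x) - Q $ x $ y * sqrt (p $ x / p $ y)) * sqrt (p $ y) =
          Q $ y $ x * p $ y / sqrt (p $ x) - Q $ x $ y * sqrt (p $ x)"
        using px py by (simp add: real_sqrt_divide field_simps)
    qed
    also have "\<dots> = (\<Sum>y\<in>UNIV. Q$y$x * p$y) / sqrt (p$x) - (\<Sum>y\<in>UNIV. Q$x$y) * sqrt (p$x)"
      by (simp add: sum_subtractf sum_divide_distrib sum_distrib_right)
    also have "\<dots> = 0" by (simp add: row colp)
    finally show ?thesis .
  qed
  then show ?thesis by (simp add: vec_eq_iff)
qed

lemma sA:
  fixes Q :: "real^'x::finite^'x" and p :: "real^'x"
  assumes gen: "generator Q" and pos: "\<forall>x. p$x > 0" and st: "transpose Q *v p = 0"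
  shows "sqrtv p \<bullet> (Amat Q p *v w) = 0"
proof -
  have skew: "Amat Q p $ x $ y = - (Amat Q p $ y $ x)" for x y by (simp add: Amat_def)
  have col: "(\<Sum>x\<in>UNIV. sqrtv p $ x * Amat Q p $ x $ y) = 0" for y
  proof -
    have "(\<Sum>x\<in>UNIV. sqrtv p $ x * Amat Q p $ x $ y) = - (\<Sum>x\<in>UNIV. Amat Q p $ y $ x * sqrtv p $ x)"
      unfolding sum_negf[symmetric] by (rule sum.cong[OF refl]) (subst skew, simp)
    also have "\<dots> = - ((Amat Q p *v sqrtv p) $ y)" by (simp add: matrix_vector_mult_def)
    also have "\<dots> = 0" using A_s[OF assms] by simp
    finally show ?thesis .
  qed
  have "sqrtv p \<bullet> (Amat Q p *v w) = (\<Sum>x\<in>UNIV. \<Sum>y\<in>UNIV. sqrtv p $ x * (Amat Q p $ x $ y * w $ y))"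
    by (simp add: inner_vec_def matrix_vector_mult_def sum_distrib_left)
  also have "\<dots> = (\<Sum>y\<in>UNIV. \<Sum>x\<in>UNIV. sqrtv p $ x * (Amat Q p $ x $ y * w $ y))"
    by (rule sum.swap)
  also have "\<dots> = (\<Sum>y\<in>UNIV. w $ y * (\<Sum>x\<in>UNIV. sqrtv p $ x * Amat Q p $ x $ y))"
    by (simp add: sum_distrib_left mult.commute mult.left_commute)
  also have "\<dots> = 0" by (simp add: col)
  finally show ?thesis .
qed

lemma ss:
  fixes p :: "real^'x::finite"
  assumes pos: "\<forall>x. p$x > 0" and "(\<Sum>x\<in>UNIV. p$x) = 1"
  shows "sqrtv p \<bullet> sqrtv p = 1"
proof -
  have "sqrtv p \<bullet> sqrtv p = (\<Sum>x\<in>UNIV. p$x)"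
    unfolding inner_vec_def sqrtv_def using pos
    by (intro sum.cong) (auto simp: less_imp_le)
  then show ?thesis using assms by simp
qed

lemma grad_E: "grad (Etil p) w = - sqrtv p"
proof -
  have "(Etil p has_derivative (\<lambda>h. - (sqrtv p \<bullet> h))) (at w)"
    unfolding Etil_def by (auto intro!: derivative_eq_intros)
  then have "frechet_derivative (Etil p) (at w) = (\<lambda>h. - (sqrtv p \<bullet> h))"
    by (metis frechet_derivative_at)
  then show ?thesis by (simp add: grad_def vec_eq_iff inner_axis)
qed

theorem proposition4p1:
  fixes Q :: "real^'x::finite^'x" and p :: "real^'x"
  assumes "generator Q" and "irreducible_gen Q"
    and "\<forall>x. p$x > 0" and "transpose Q *v p = 0" and "(\<Sum>x\<in>UNIV. p$x) = 1"
  shows "(\<forall>w. transpose (Jtil Q p w) = - Jtil Q p w)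
    \<and> (\<forall>G1 G2 G3 :: real^'x \<Rightarrow> real.
          (\<forall>w. G1 differentiable (at w)) \<and> (\<forall>w. grad G1 differentiable (at w)) \<and>
          (\<forall>w. G2 differentiable (at w)) \<and> (\<forall>w. grad G2 differentiable (at w)) \<and>
          (\<forall>w. G3 differentiable (at w)) \<and> (\<forall>w. grad G3 differentiable (at w)) \<longrightarrow>
          (\<forall>w. bracket (Jtil Q p) G1 (bracket (Jtil Q p) G2 G3) w
             + bracket (Jtil Q p) G2 (bracket (Jtil Q p) G3 G1) w
             + bracket (Jtil Q p) G3 (bracket (Jtil Q p) G1 G2) w = 0))
    \<and> (\<forall>w. (1/2) *\<^sub>R (Amat Q p *v w) = Jtil Q p w *v grad (Etil p) w)"
proof -
  have Jdef: "Jtil Q p = (\<lambda>w. (1/2) *\<^sub>R (outer (sqrtv p) (Amat Q p *v w) - outer (Amat Q p *v w) (sqrtv p)))"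
    by (rule ext) (simp add: Jtil_def)
  have Ms: "Amat Q p *v sqrtv p = 0" using A_s assms by blast
  have P1: "\<forall>w. transpose (Jtil Q p w) = - Jtil Q p w"
    by (simp add: Jtil_def outer_def transpose_def vec_eq_iff algebra_simps)
  have P2: "\<forall>G1 G2 G3 :: real^'x \<Rightarrow> real.
          (\<forall>w. G1 differentiable (at w)) \<and> (\<forall>w. grad G1 differentiable (at w)) \<and>
          (\<forall>w. G2 differentiable (at w)) \<and> (\<forall>w. grad G2 differentiable (at w)) \<and>
          (\<forall>w. G3 differentiable (at w)) \<and> (\<forall>w. grad G3 differentiable (at w)) \<longrightarrow>
          (\<forall>w. bracket (Jtil Q p) G1 (bracket (Jtil Q p) G2 G3) w
             + bracket (Jtil Q p) G2 (bracket (Jtil Q p) G3 G1) w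
             + bracket (Jtil Q p) G3 (bracket (Jtil Q p) G1 G2) w = 0)"
    unfolding Jdef using jacobi_generic[OF Ms] by blast
  have P3: "\<forall>w. (1/2) *\<^sub>R (Amat Q p *v w) = Jtil Q p w *v grad (Etil p) w"
  proof
    fix w
    have "Jtil Q p w *v grad (Etil p) w
       = (1/2) *\<^sub>R (((Amat Q p *v w) \<bullet> - sqrtv p) *\<^sub>R sqrtv p - (sqrtv p \<bullet> - sqrtv p) *\<^sub>R (Amat Q p *v w))"
      unfolding Jdef grad_E Jv ..
    also have "\<dots> = (1/2) *\<^sub>R (Amat Q p *v w)"
      using sA[of Q p w] ss[of p] assms by (simp add: inner_commute)
    finally show "(1/2) *\<^sub>R (Amat Q p *v w) = Jtil Q p w *v grad (Etil p) w" by simp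
  qed
  show ?thesis using P1 P2 P3 by blast
qed

end
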